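(* Let $M_G$ be a mixed graph, let $W\subset V(M_G)$ be non-empty, let $U=V(M_G)\setminus W$, and suppose $M_G$ contains no arc $\overrightarrow{uw}$ with $u\in U$ and $w\in W$. Let $M_{G'}$ be obtained from $M_G$ by replacing every arc $\overrightarrow{wu}$ ($w\in W$, $u\in U$) with the undirected edge $\{w,u\}$ and every undirected edge $\{u,w\}$ ($u\in U$, $w\in W$) with the arc $\overrightarrow{uw}$ (all other edges unchanged). Then $M_{G'}$ and $M_G$ are cospectral.
   Context: A mixed graph $M_G$ is obtained from a finite simple graph $G$ by orienting the edges of some subset of $E(G)$; oriented edges are arcs $\overrightarrow{uv}$, the others are undirected edges $\{u,v\}$. With $\omega=\frac{1+\mathbf{i}\sqrt3}{2}$, the matrix $N(M_G)$ has $(u,v)$-entry $\omega$ if $\overrightarrow{uv}$ is an arc, $\bar\omega$ if $\overrightarrow{vu}$ is an arc, $1$ if $\{u,v\}$ is an undirected edge, $0$ otherwise. Two mixed graphs are cospectral if their matrices $N$ have the same multiset of eigenvalues. *)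

theory Defs
  imports "Jordan_Normal_Form.Char_Poly" "HOL-Computational_Algebra.Polynomial"
begin

text \<open>A mixed graph on the vertex set {0..<n}: E is the set of undirected edges, stored as a
 symmetric relation (both (u,v) and (v,u) for the edge {u,v}); A is the set of arcs, (u,v) in A
 meaning the arc from u to v.\<close>

definition mixed_graph :: "nat \<Rightarrow> (nat \<times> nat) set \<Rightarrow> (nat \<times> nat) set \<Rightarrow> bool" where
  "mixed_graph n E A \<longleftrightarrow>
     E \<subseteq> {..<n} \<times> {..<n} \<and> A \<subseteq> {..<n} \<times> {..<n} \<and>
     (\<forall>u v. (u,v) \<in> E \<longrightarrow> (v,u) \<in> E) \<and>
     (\<forall>u. (u,u) \<notin> E \<and> (u,u) \<notin> A) \<and>
     (\<forall>u v. (u,v) \<in> A \<longrightarrow> (v,u) \<notin> A \<and> (u,v) \<notin> E)"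

definition omega :: complex where
  "omega = Complex (1/2) (sqrt 3 / 2)"

definition Nmat :: "nat \<Rightarrow> (nat \<times> nat) set \<Rightarrow> (nat \<times> nat) set \<Rightarrow> complex mat" where
  "Nmat n E A = mat n n (\<lambda>(u,v).
      if (u,v) \<in> A then omega
      else if (v,u) \<in> A then cnj omega
      else if (u,v) \<in> E then 1 else 0)"

definition eigenvalue_mset :: "complex mat \<Rightarrow> complex multiset" where
  "eigenvalue_mset M = proots (char_poly M)"

definition cospectral :: "complex mat \<Rightarrow> complex mat \<Rightarrow> bool" where
  "cospectral M M' \<longleftrightarrow> eigenvalue_mset M = eigenvalue_mset M'"

definition switch_arcs :: "nat \<Rightarrow> nat set \<Rightarrow> (nat \<times> nat) set \<Rightarrow> (nat \<times> nat) set \<Rightarrow> (nat \<times> nat) set" where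
  "switch_arcs n W E A =
     (A - {(w,u). w \<in> W \<and> u \<in> {..<n} - W})
     \<union> {(u,w). u \<in> {..<n} - W \<and> w \<in> W \<and> (u,w) \<in> E}"

definition switch_edges :: "nat \<Rightarrow> nat set \<Rightarrow> (nat \<times> nat) set \<Rightarrow> (nat \<times> nat) set \<Rightarrow> (nat \<times> nat) set" where
  "switch_edges n W E A =
     (E - {(x,y). (x \<in> W \<and> y \<in> {..<n} - W) \<or> (x \<in> {..<n} - W \<and> y \<in> W)})
     \<union> {(w,u). w \<in> W \<and> u \<in> {..<n} - W \<and> (w,u) \<in> A}
     \<union> {(u,w). w \<in> W \<and> u \<in> {..<n} - W \<and> (w,u) \<in> A}"

end

theory Submission
  imports Defs
begin

lemma omega_cnj: "omega * cnj omega = 1" "cnj omega * omega = 1"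
proof -
  have "sqrt 3 * sqrt 3 = (3::real)" by simp
  then show "omega * cnj omega = 1" "cnj omega * omega = 1"
    by (simp_all add: omega_def complex_eq_iff)
qed

theorem theorem4p1:
  fixes n :: nat and E A :: "(nat \<times> nat) set" and W :: "nat set"
  assumes "mixed_graph n E A"
    and "W \<subseteq> {..<n}" and "W \<noteq> {}"
    and "\<forall>u \<in> {..<n} - W. \<forall>w \<in> W. (u,w) \<notin> A"
  shows "cospectral (Nmat n (switch_edges n W E A) (switch_arcs n W E A)) (Nmat n E A)"
proof -
  note mg = assms(1)[unfolded mixed_graph_def]
  define d where "d = (\<lambda>i. if i \<in> W then cnj omega else 1)"
  define e where "e = (\<lambda>i. if i \<in> W then omega else 1)"
  let ?P = "mat_diag n d" and ?Q = "mat_diag n e"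
  let ?N = "Nmat n E A" and ?N' = "Nmat n (switch_edges n W E A) (switch_arcs n W E A)"
  have NC: "?N \<in> carrier_mat n n" "?N' \<in> carrier_mat n n" by (auto simp: Nmat_def)
  have PQ: "?P * ?Q = 1\<^sub>m n" "?Q * ?P = 1\<^sub>m n"
    by (simp_all add: d_def e_def omega_cnj if_distrib cong: if_cong)
  have eq: "?N' = ?P * ?N * ?Q"
  proof -
    have "?P * ?N * ?Q = mat n n (\<lambda>(i,j). d i * ?N $$ (i,j) * e j)"
      by (subst mat_diag_mult_left[OF NC(1)], subst mat_diag_mult_right[of _ n], auto)
    also have "\<dots> = ?N'"
    proof (rule eq_matI)
      fix i j assume ij0: "i < dim_row ?N'" "j < dim_col ?N'"
      have ij: "i < n" "j < n" using ij0 NC(2) by auto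
      show "mat n n (\<lambda>(i,j). d i * ?N $$ (i,j) * e j) $$ (i,j) = ?N' $$ (i,j)"
      proof -
        have L: "mat n n (\<lambda>(i,j). d i * ?N $$ (i,j) * e j) $$ (i,j) = d i * ?N $$ (i,j) * e j"
          using ij by simp
        have N: "?N $$ (i,j) = (if (i,j) \<in> A then omega else if (j,i) \<in> A then cnj omega
            else if (i,j) \<in> E then 1 else 0)" using ij by (simp add: Nmat_def)
        have N': "?N' $$ (i,j) = (if (i,j) \<in> switch_arcs n W E A then omega
            else if (j,i) \<in> switch_arcs n W E A then cnj omega
            else if (i,j) \<in> switch_edges n W E A then 1 else 0)" using ij by (simp add: Nmat_def)
        have Esym: "(i,j) \<in> E \<longleftrightarrow> (j,i) \<in> E" using mg by blast
        have AE1: "(i,j) \<in> A \<Longrightarrow> (i,j) \<notin> E \<and> (j,i) \<notin> A" using mg by blast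
        have AE2: "(j,i) \<in> A \<Longrightarrow> (j,i) \<notin> E \<and> (i,j) \<notin> A" using mg by blast
        have key: "d i * ?N $$ (i,j) * e j = ?N' $$ (i,j)"
        proof (cases "i \<in> W"; cases "j \<in> W")
          assume "i \<in> W" "j \<in> W"
          then show ?thesis unfolding N N' unfolding d_def e_def switch_edges_def switch_arcs_def
            using omega_cnj by simp
        next
          assume "i \<notin> W" "j \<notin> W"
          then show ?thesis unfolding N N' unfolding d_def e_def switch_edges_def switch_arcs_def
            by simp
        next
          assume a: "i \<in> W" "j \<notin> W"
          have "(j,i) \<notin> A" using assms(4) a ij by blast
          then show ?thesis unfolding N N' unfolding d_def e_def switch_edges_def switch_arcs_def
            using a ij Esym AE1 omega_cnj by auto
        next
          assume a: "i \<notin> W" "j \<in> W"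
          have "(i,j) \<notin> A" using assms(4) a ij by blast
          then show ?thesis unfolding N N' unfolding d_def e_def switch_edges_def switch_arcs_def
            using a ij Esym AE2 omega_cnj by auto
        qed
        show ?thesis using L key by simp
      qed
    qed (use NC(2) in auto)
    finally show ?thesis by simp
  qed
  have "similar_mat ?N' ?N"
    by (rule similar_matI[where n=n and P="?P" and Q="?Q"], use NC PQ eq in auto)
  then show ?thesis unfolding cospectral_def eigenvalue_mset_def
    by (simp add: char_poly_similar)
qed

end
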